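(* Let $M$ be a measure-once quantum finite automaton that uses both a left and a right end-marker. Then there exists a measure-once quantum finite automaton $M'$ that uses only a right end-marker and is equivalent to $M$, i.e. for every $x\in\Sigma^*$ the probability that $M$ accepts $x$ equals the probability that $M'$ accepts $x$.
   Context: A measure-once QFA with one (right) end-marker over $\Sigma$ is a tuple $(Q,\Sigma,\{U_\sigma\}_{\sigma\in\Sigma\cup\{\$\}},q_0,F)$, with $Q$ finite indexing an orthonormal basis of $\mathbb{C}^Q$, $\$\notin\Sigma$, each $U_\sigma$ unitary, $q_0\in Q$, $F\subseteq Q$; its acceptance probability on $x=x_1\cdots x_n$ is $\|P\,U_\$U_{x_n}\cdots U_{x_1}|q_0\rangle\|^2$, $P$ being the orthogonal projection onto $\mathrm{span}\{|q\rangle:q\in F\}$. A measure-once QFA with both end-markers additionally has a unitary $U_{¢}$ for a left end-marker ${¢}\notin\Sigma\cup\{\$\}$ and reads ${¢}x\$$, so its acceptance probability is $\|P\,U_\$U_{x_n}\cdots U_{x_1}U_{¢}|q_0\rangle\|^2$. *)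

theory Defs
  imports "Jordan_Normal_Form.Matrix"
begin

definition cadj :: "complex mat \<Rightarrow> complex mat" where
  "cadj A = mat (dim_col A) (dim_row A) (\<lambda>(i,j). cnj (A $$ (j,i)))"

definition unitary_mat :: "nat \<Rightarrow> complex mat \<Rightarrow> bool" where
  "unitary_mat n A \<longleftrightarrow> A \<in> carrier_mat n n \<and> cadj A * A = 1\<^sub>m n \<and> A * cadj A = 1\<^sub>m n"

text \<open>Measure-once QFA with only a right end-marker over alphabet 'a:
  number of basis states (Q = {0..<n}), unitaries U_sigma, unitary U_$,
  initial state q0, accepting states F.\<close>

record 'a mo_qfa_r =
  nstates_r :: nat
  U_r :: "'a \<Rightarrow> complex mat"
  Uend_r :: "complex mat"
  init_r :: nat
  acc_r :: "nat set"

record 'a mo_qfa_lr =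
  nstates_lr :: nat
  U_lr :: "'a \<Rightarrow> complex mat"
  Ubegin_lr :: "complex mat"
  Uend_lr :: "complex mat"
  init_lr :: nat
  acc_lr :: "nat set"

definition wf_qfa_r :: "'a set \<Rightarrow> 'a mo_qfa_r \<Rightarrow> bool" where
  "wf_qfa_r Alph M \<longleftrightarrow>
     init_r M < nstates_r M \<and> acc_r M \<subseteq> {..<nstates_r M} \<and>
     (\<forall>s\<in>Alph. unitary_mat (nstates_r M) (U_r M s)) \<and>
     unitary_mat (nstates_r M) (Uend_r M)"

definition wf_qfa_lr :: "'a set \<Rightarrow> 'a mo_qfa_lr \<Rightarrow> bool" where
  "wf_qfa_lr Alph M \<longleftrightarrow>
     init_lr M < nstates_lr M \<and> acc_lr M \<subseteq> {..<nstates_lr M} \<and>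
     (\<forall>s\<in>Alph. unitary_mat (nstates_lr M) (U_lr M s)) \<and>
     unitary_mat (nstates_lr M) (Ubegin_lr M) \<and>
     unitary_mat (nstates_lr M) (Uend_lr M)"

definition run_word :: "('a \<Rightarrow> complex mat) \<Rightarrow> 'a list \<Rightarrow> complex vec \<Rightarrow> complex vec" where
  "run_word U xs v = fold (\<lambda>s w. U s *\<^sub>v w) xs v"

text \<open>Squared norm of the orthogonal projection onto span{|q> : q in F}.\<close>

definition proj_norm_sq :: "nat set \<Rightarrow> complex vec \<Rightarrow> real" where
  "proj_norm_sq F w = (\<Sum>q\<in>F. (cmod (w $ q))\<^sup>2)"

definition accept_prob_r :: "'a mo_qfa_r \<Rightarrow> 'a list \<Rightarrow> real" where
  "accept_prob_r M x =
     proj_norm_sq (acc_r M)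
       (Uend_r M *\<^sub>v run_word (U_r M) x (unit_vec (nstates_r M) (init_r M)))"

definition accept_prob_lr :: "'a mo_qfa_lr \<Rightarrow> 'a list \<Rightarrow> real" where
  "accept_prob_lr M x =
     proj_norm_sq (acc_lr M)
       (Uend_lr M *\<^sub>v run_word (U_lr M) x
          (Ubegin_lr M *\<^sub>v unit_vec (nstates_lr M) (init_lr M)))"

end

theory Submission
  imports Defs
begin

lemma unitary_dims: "unitary_mat n A \<Longrightarrow> A \<in> carrier_mat n n"
  by (simp add: unitary_mat_def)

lemma cadj_carrier: "A \<in> carrier_mat n m \<Longrightarrow> cadj A \<in> carrier_mat m n"
  by (simp add: cadj_def)

lemma cadj_mult: "A \<in> carrier_mat n m \<Longrightarrow> B \<in> carrier_mat m k \<Longrightarrow> cadj (A * B) = cadj B * cadj A"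
  unfolding cadj_def
  by (rule eq_matI) (auto simp: scalar_prod_def intro!: sum.cong)

lemma cadj_cadj: "cadj (cadj A) = A"
  unfolding cadj_def by (rule eq_matI) auto

lemma unitary_mult:
  assumes "unitary_mat n A" "unitary_mat n B"
  shows "unitary_mat n (A * B)"
proof -
  have A: "A \<in> carrier_mat n n" and B: "B \<in> carrier_mat n n" using assms unitary_dims by auto
  have AH: "cadj A \<in> carrier_mat n n" and BH: "cadj B \<in> carrier_mat n n" using A B cadj_carrier by auto
  have "cadj (A*B) * (A*B) = cadj B * (cadj A * A) * B"
    using A B AH BH by (simp add: cadj_mult assoc_mult_mat[of _ n n _ n _ n])
  also have "\<dots> = 1\<^sub>m n" using assms B BH by (simp add: unitary_mat_def)
  finally have 1: "cadj (A*B) * (A*B) = 1\<^sub>m n" .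
  have "(A*B) * cadj (A*B) = A * (B * cadj B) * cadj A"
    using A B AH BH by (simp add: cadj_mult assoc_mult_mat[of _ n n _ n _ n])
  also have "\<dots> = 1\<^sub>m n" using assms A AH by (simp add: unitary_mat_def)
  finally show ?thesis using 1 A B by (simp add: unitary_mat_def)
qed

lemma unitary_cadj: "unitary_mat n A \<Longrightarrow> unitary_mat n (cadj A)"
  by (auto simp: unitary_mat_def cadj_cadj cadj_carrier)

lemma run_word_carrier:
  assumes "\<forall>s\<in>Alph. U s \<in> carrier_mat n n" "set xs \<subseteq> Alph" "v \<in> carrier_vec n"
  shows "run_word U xs v \<in> carrier_vec n"
  using assms(2,3)
proof (induction xs arbitrary: v)
  case Nil thus ?case by (simp add: run_word_def)
next
  case (Cons a xs)
  have "U a *\<^sub>v v \<in> carrier_vec n" using Cons.prems assms(1) by auto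
  thus ?case using Cons by (simp add: run_word_def)
qed

lemma run_word_conj:
  assumes U: "\<forall>s\<in>Alph. U s \<in> carrier_mat n n" and V: "unitary_mat n V"
    and "set xs \<subseteq> Alph" "v \<in> carrier_vec n"
  shows "run_word (\<lambda>s. cadj V * U s * V) xs (cadj V *\<^sub>v v) = cadj V *\<^sub>v run_word U xs v"
  using assms(3,4)
proof (induction xs arbitrary: v)
  case Nil thus ?case by (simp add: run_word_def)
next
  case (Cons a xs)
  have Vc: "V \<in> carrier_mat n n" using V unitary_dims by auto
  have VH: "cadj V \<in> carrier_mat n n" using Vc cadj_carrier by auto
  have Ua: "U a \<in> carrier_mat n n" using U Cons.prems by auto
  have VVH: "V * cadj V = 1\<^sub>m n" using V by (simp add: unitary_mat_def)
  have "(cadj V * U a * V) *\<^sub>v (cadj V *\<^sub>v v) = (cadj V * U a) *\<^sub>v ((V * cadj V) *\<^sub>v v)"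
    using Vc VH Ua Cons.prems by (simp add: assoc_mult_mat_vec[of _ n n _ n])
  also have "\<dots> = (cadj V * U a) *\<^sub>v v" using VVH Cons.prems by simp
  also have "\<dots> = cadj V *\<^sub>v (U a *\<^sub>v v)"
    using VH Ua Cons.prems by (simp add: assoc_mult_mat_vec[of _ n n _ n])
  finally have st: "(cadj V * U a * V) *\<^sub>v (cadj V *\<^sub>v v) = cadj V *\<^sub>v (U a *\<^sub>v v)" .
  have "U a *\<^sub>v v \<in> carrier_vec n" using Ua Cons.prems by auto
  hence "run_word (\<lambda>s. cadj V * U s * V) xs (cadj V *\<^sub>v (U a *\<^sub>v v)) = cadj V *\<^sub>v run_word U xs (U a *\<^sub>v v)"
    using Cons by auto
  thus ?case using st by (simp add: run_word_def)
qed

theorem theoremA1: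
  fixes Alph :: "'a set" and M :: "'a mo_qfa_lr"
  assumes "finite Alph"
    and "wf_qfa_lr Alph M"
  shows "\<exists>M' :: 'a mo_qfa_r. wf_qfa_r Alph M' \<and>
           (\<forall>x. set x \<subseteq> Alph \<longrightarrow> accept_prob_r M' x = accept_prob_lr M x)"
proof -
  let ?n = "nstates_lr M"
  let ?V = "Ubegin_lr M"
  let ?U = "U_lr M"
  define M' where "M' = \<lparr>nstates_r = ?n, U_r = (\<lambda>s. cadj ?V * ?U s * ?V),
     Uend_r = Uend_lr M * ?V, init_r = init_lr M, acc_r = acc_lr M\<rparr>"
  have wf: "init_lr M < ?n" "acc_lr M \<subseteq> {..<?n}" "\<forall>s\<in>Alph. unitary_mat ?n (?U s)"
    "unitary_mat ?n ?V" "unitary_mat ?n (Uend_lr M)"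
    using assms(2) by (auto simp: wf_qfa_lr_def)
  have "wf_qfa_r Alph M'"
    using wf unfolding M'_def wf_qfa_r_def
    by (auto intro!: unitary_mult unitary_cadj)
  moreover have "accept_prob_r M' x = accept_prob_lr M x" if x: "set x \<subseteq> Alph" for x
  proof -
    have Vc: "?V \<in> carrier_mat ?n ?n" using wf unitary_dims by auto
    have VH: "cadj ?V \<in> carrier_mat ?n ?n" using Vc cadj_carrier by auto
    have Ec: "Uend_lr M \<in> carrier_mat ?n ?n" using wf unitary_dims by auto
    have Uc: "\<forall>s\<in>Alph. ?U s \<in> carrier_mat ?n ?n" using wf unitary_dims by auto
    let ?e = "unit_vec ?n (init_lr M)"
    have e: "?e \<in> carrier_vec ?n" by simp
    have Ve: "?V *\<^sub>v ?e \<in> carrier_vec ?n" using Vc by simp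
    have "cadj ?V *\<^sub>v (?V *\<^sub>v ?e) = (cadj ?V * ?V) *\<^sub>v ?e"
      using Vc VH by (simp add: assoc_mult_mat_vec[of _ ?n ?n _ ?n])
    also have "\<dots> = ?e" using wf by (simp add: unitary_mat_def)
    finally have ee: "cadj ?V *\<^sub>v (?V *\<^sub>v ?e) = ?e" .
    have r: "run_word ?U x (?V *\<^sub>v ?e) \<in> carrier_vec ?n"
      using run_word_carrier[OF Uc x Ve] .
    have "Uend_lr M * ?V *\<^sub>v run_word (\<lambda>s. cadj ?V * ?U s * ?V) x ?e
        = Uend_lr M * ?V *\<^sub>v (cadj ?V *\<^sub>v run_word ?U x (?V *\<^sub>v ?e))"
      using run_word_conj[OF Uc wf(4) x Ve] ee by simp
    also have "\<dots> = Uend_lr M *\<^sub>v ((?V * cadj ?V) *\<^sub>v run_word ?U x (?V *\<^sub>v ?e))"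
      using Vc VH Ec r by (simp add: assoc_mult_mat_vec[of _ ?n ?n _ ?n] assoc_mult_mat[of _ ?n ?n _ ?n _ ?n])
    also have "\<dots> = Uend_lr M *\<^sub>v run_word ?U x (?V *\<^sub>v ?e)"
      using wf r by (simp add: unitary_mat_def)
    finally show ?thesis unfolding accept_prob_r_def accept_prob_lr_def M'_def by simp
  qed
  ultimately show ?thesis by blast
qed

end
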